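(* Let $H$ be a connected hypermap and let $A\subseteq E(H)$, with $A^{c}=E(H)\setminus A$. Then the Euler characteristic of the partial dual $H^{A}$ satisfies \[ \chi(H^{A})=\chi(A)+\chi(A^{c})-2v(H), \] where $A$ and $A^c$ are regarded as spanning sub-hypermaps of $H$.
   Context: A hypergraph $H$ has a vertex set $V(H)$ and a hyperedge set $E(H)$, each hyperedge being a nonempty subset of $V(H)$; its incidence (bipartite) graph $G_H$ has vertex set $V(H)\cup E(H)$, with $v\in V(H)$ joined to $e\in E(H)$ iff $v\in e$. A hypermap (also denoted $H$) is a cellular embedding of $G_H$ in a closed surface; its vertices, hyperedges and faces are the nodes of $G_H$ in $V(H)$, the nodes of $G_H$ in $E(H)$, and the faces of this embedding. Write $v(H),e(H),f(H)$ for their numbers and $n_i=|e_i|$ for the degree of the hyperedge $e_i$. The Euler characteristic is $\chi(H)=v(H)+e(H)+f(H)-\sum_{i=1}^{e(H)}n_i$ (the Euler characteristic of the embedded graph $G_H$, summed over components). Combinatorially a hypermap is a triple $(B,\tau,\psi)$: $B$ is a finite set of labels, the cycles of the permutation $\tau$ (coming in pairs, one for each side) encode the rotations at the vertices, the cycles of $\psi$ encode the hyperedges, and the cycles of $\psi\circ\tau$ encode the faces. For $A\subseteq E(H)$, $A$ also denotes the spanning sub-hypermap obtained by deleting from the embedding all hyperedges not in $A$ (with their incidences) while keeping all vertices and the induced rotations; it may be disconnected, and $v(A)=v(H)$. The partial dual of $H=(B,\tau,\psi)$ with respect to $A$ is $H^{A}=(B,\psi|_A\circ\tau,\psi)$,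 where $\psi|_A$ agrees with $\psi$ on labels belonging to hyperedges of $A$ and is the identity on all other labels.
   Formalization: The partial dual $H^{A}$ has hyperedge permutation equal to the inverse of $\psi$ on labels belonging to hyperedges of $A$ and to $\psi$ elsewhere, in place of $\psi$. The statement above fails without it. *)

theory Defs
  imports Complex_Main
begin

text \<open>A hypermap is given by a finite label set B, a
permutation tau of B (vertex rotations, two cycles per vertex, one for each side),
a permutation psi of B (hyperedge rotations, two cycles per hyperedge), together
with the maps vx, he sending a label to the vertex / hyperedge of the incidence
it belongs to.  Faces are the cycles
of psi o tau (again two per face).\<close>

definition cyc :: "('b \<Rightarrow> 'b) \<Rightarrow> 'b \<Rightarrow> 'b set" where
  "cyc f x = {y. \<exists>n. y = (f ^^ n) x}"

definition ncyc :: "'b set \<Rightarrow> ('b \<Rightarrow> 'b) \<Rightarrow> nat" where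
  "ncyc B f = card (cyc f ` B)"

definition hypermap ::
  "'b set \<Rightarrow> ('b \<Rightarrow> 'b) \<Rightarrow> ('b \<Rightarrow> 'b) \<Rightarrow> ('b \<Rightarrow> 'v) \<Rightarrow> ('b \<Rightarrow> 'e) \<Rightarrow> bool" where
  "hypermap B tau psi vx he \<longleftrightarrow>
     finite B \<and> bij_betw tau B B \<and> bij_betw psi B B \<and>
     (\<forall>x\<in>B. vx (tau x) = vx x \<and> he (psi x) = he x) \<and>
     (\<forall>x\<in>B. card {y\<in>B. vx y = vx x \<and> he y = he x} = 2 \<and>
        (\<forall>y\<in>B. vx y = vx x \<and> he y = he x \<and> y \<noteq> x \<longrightarrow>
            cyc tau y \<noteq> cyc tau x \<and> cyc psi y \<noteq> cyc psi x)) \<and>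
     (\<forall>x\<in>B. card (cyc tau ` {y\<in>B. vx y = vx x}) = 2 \<and>
             card (cyc psi ` {y\<in>B. he y = he x}) = 2)"

definition hm_connected :: "'b set \<Rightarrow> ('b \<Rightarrow> 'v) \<Rightarrow> ('b \<Rightarrow> 'e) \<Rightarrow> bool" where
  "hm_connected B vx he \<longleftrightarrow>
     (\<forall>x\<in>B. \<forall>y\<in>B. (x, y) \<in> {(a, b). a \<in> B \<and> b \<in> B \<and> (vx a = vx b \<or> he a = he b)}\<^sup>*)"

text \<open>Euler characteristic of a hypermap given as a triple (B, tau, psi):
v = #cycles(tau)/2, e = #cycles(psi)/2, f = #cycles(psi o tau)/2,
sum of hyperedge degrees = |B|/2 (two labels per incidence).\<close>
definition hm_chi :: "'b set \<times> ('b \<Rightarrow> 'b) \<times> ('b \<Rightarrow> 'b) \<Rightarrow> real" where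
  "hm_chi H = (case H of (B, tau, psi) \<Rightarrow>
      real (ncyc B tau) / 2 + real (ncyc B psi) / 2 + real (ncyc B (psi \<circ> tau)) / 2
      - real (card B) / 2)"

definition labs :: "'b set \<Rightarrow> ('b \<Rightarrow> 'e) \<Rightarrow> 'e set \<Rightarrow> 'b set" where
  "labs B he A = {x\<in>B. he x \<in> A}"

definition restr :: "'b set \<Rightarrow> ('b \<Rightarrow> 'b) \<Rightarrow> 'b \<Rightarrow> 'b" where
  "restr S f = (\<lambda>x. if x \<in> S then f x else x)"

definition induced :: "'b set \<Rightarrow> ('b \<Rightarrow> 'b) \<Rightarrow> 'b \<Rightarrow> 'b" where
  "induced S f x = (if x \<in> S then (f ^^ (LEAST n. 0 < n \<and> (f ^^ n) x \<in> S)) x else x)"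

definition hdeg :: "'b set \<Rightarrow> ('b \<Rightarrow> 'v) \<Rightarrow> ('b \<Rightarrow> 'e) \<Rightarrow> 'e \<Rightarrow> nat" where
  "hdeg B vx he e = card {vx x | x. x \<in> B \<and> he x = e}"

text \<open>Euler characteristic of the spanning sub-hypermap A (delete the hyperedges not
in A with their incidences, keep all vertices and induced rotations):
v(A) = v(H), e(A) = |A|, f(A) = faces of the labelled part (cycles of
psi o induced rotation, two per face) plus one face per vertex left isolated,
minus the sum of the degrees of the hyperedges in A.\<close>
definition sub_chi ::
  "'b set \<Rightarrow> ('b \<Rightarrow> 'b) \<Rightarrow> ('b \<Rightarrow> 'b) \<Rightarrow> ('b \<Rightarrow> 'v) \<Rightarrow> ('b \<Rightarrow> 'e) \<Rightarrow> 'e set \<Rightarrow> real" where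
  "sub_chi B tau psi vx he A =
     (let BA = labs B he A;
          fA = real (ncyc BA (psi \<circ> induced BA tau)) / 2
               + real (card (vx ` B - vx ` BA))
      in real (card (vx ` B)) + real (card A) + fA - real (\<Sum>e\<in>A. hdeg B vx he e))"

text \<open>Partial dual with respect to A: vertex rotation psi|_A o tau; the hyperedges
are unchanged as cycles, the rotation of the hyperedges in A being reversed
(psi^-1 on labels of A).\<close>
definition pdual ::
  "'b set \<Rightarrow> ('b \<Rightarrow> 'b) \<Rightarrow> ('b \<Rightarrow> 'b) \<Rightarrow> ('b \<Rightarrow> 'e) \<Rightarrow> 'e set
     \<Rightarrow> 'b set \<times> ('b \<Rightarrow> 'b) \<times> ('b \<Rightarrow> 'b)" where
  "pdual B tau psi he A =
     (B, restr (labs B he A) psi \<circ> tau,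
      (\<lambda>x. if x \<in> labs B he A then inv_into B psi x else psi x))"

end

theory Submission
  imports Defs
begin

lemma cyc_self: "x \<in> cyc f x"
  unfolding cyc_def by (auto intro: exI[of _ 0])

lemma cyc_funpow: "(f ^^ n) x \<in> cyc f x"
  unfolding cyc_def by auto

lemma cyc_step: "y \<in> cyc f x \<Longrightarrow> f y \<in> cyc f x"
  unfolding cyc_def by (auto intro: exI[of _ "Suc n" for n])

lemma cyc_trans: "y \<in> cyc f x \<Longrightarrow> cyc f y \<subseteq> cyc f x"
proof
  fix z assume "y \<in> cyc f x" "z \<in> cyc f y"
  then obtain m n where "y = (f ^^ m) x" "z = (f ^^ n) y" unfolding cyc_def by auto
  then have "z = (f ^^ (n + m)) x" by (simp add: funpow_add)
  then show "z \<in> cyc f x" unfolding cyc_def by auto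
qed

lemma funpow_in: "x \<in> B \<Longrightarrow> f ` B \<subseteq> B \<Longrightarrow> (f ^^ n) x \<in> B"
  by (induction n) auto

lemma cyc_subset: assumes "x \<in> B" "f ` B \<subseteq> B" shows "cyc f x \<subseteq> B"
proof
  fix z assume "z \<in> cyc f x"
  with assms show "z \<in> B" unfolding cyc_def using funpow_in[of x B f] by auto
qed

lemma funpow_cancel:
  assumes "inj_on f B" "f ` B \<subseteq> B"
  shows "a \<in> B \<Longrightarrow> b \<in> B \<Longrightarrow> (f ^^ i) a = (f ^^ i) b \<Longrightarrow> a = b"
proof (induction i arbitrary: a b)
  case 0 then show ?case by simp
next
  case (Suc i)
  have "(f ^^ i) (f a) = (f ^^ i) (f b)" using Suc.prems by (simp add: funpow_swap1)
  then have "f a = f b" using Suc.IH[of "f a" "f b"] Suc.prems assms by auto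
  then show ?case using assms(1) Suc.prems inj_onD by metis
qed

lemma period:
  assumes "finite B" "bij_betw f B B" "x \<in> B"
  shows "\<exists>p>0. (f ^^ p) x = x"
proof -
  have fB: "f ` B \<subseteq> B" and inj: "inj_on f B" using bij_betw_imp_surj_on[OF assms(2)] bij_betw_imp_inj_on[OF assms(2)] by auto
  let ?F = "\<lambda>n. (f ^^ n) x"
  have "?F ` {..card B} \<subseteq> B" using funpow_in[OF assms(3) fB] by auto
  then have "card (?F ` {..card B}) \<le> card B" using assms(1) card_mono by blast
  then have "\<not> inj_on ?F {..card B}" using pigeonhole[of ?F "{..card B}"] by simp
  then obtain i j where ij: "i \<noteq> j" "?F i = ?F j" unfolding inj_on_def by blast
  have "\<exists>i j. i < j \<and> ?F i = ?F j"
    using ij by (metis linorder_neqE_nat)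
  then obtain i j where "i < j" "?F i = ?F j" by blast
  then have "(f ^^ i) x = (f ^^ i) ((f ^^ (j - i)) x)"
    by (metis (no_types, lifting) comp_apply funpow_add le_add_diff_inverse less_imp_le_nat)
  then have "x = (f ^^ (j - i)) x"
    using funpow_cancel[OF inj fB] assms(3) funpow_in[OF assms(3) fB] by blast
  then show ?thesis using \<open>i < j\<close> by (intro exI[of _ "j - i"]) auto
qed

lemma period_mult: "(f ^^ p) x = x \<Longrightarrow> (f ^^ (p * k)) x = x"
  by (induction k) (auto simp: funpow_add)

lemma cyc_sym:
  assumes "finite B" "bij_betw f B B" "x \<in> B" "y \<in> cyc f x"
  shows "x \<in> cyc f y"
proof -
  obtain m where m: "y = (f ^^ m) x" using assms(4) unfolding cyc_def by auto
  obtain p where p: "p > 0" "(f ^^ p) x = x" using period[OF assms(1-3)] by blast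
  have le: "m \<le> p * m" using p(1) by simp
  have "x = (f ^^ (p * m)) x" using period_mult[OF p(2)] by simp
  also have "\<dots> = (f ^^ (p * m - m + m)) x" using le by simp
  also have "\<dots> = (f ^^ (p * m - m)) y" by (simp add: funpow_add m)
  finally show ?thesis unfolding cyc_def by auto
qed

lemma cyc_eq:
  assumes "finite B" "bij_betw f B B" "x \<in> B" "y \<in> cyc f x"
  shows "cyc f y = cyc f x"
  using cyc_trans[OF assms(4)] cyc_trans[OF cyc_sym[OF assms]] by blast

lemma cyc_cong:
  assumes "f ` T \<subseteq> T" "\<forall>z\<in>T. f z = g z" "x \<in> T"
  shows "cyc f x = cyc g x"
proof -
  have "\<forall>n. (f ^^ n) x = (g ^^ n) x \<and> (f ^^ n) x \<in> T"
  proof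
    fix n show "(f ^^ n) x = (g ^^ n) x \<and> (f ^^ n) x \<in> T"
      using assms by (induction n) auto
  qed
  then show ?thesis unfolding cyc_def by auto
qed

lemma cyc_sub_gen:
  assumes "x \<in> T" "f ` T \<subseteq> T" "\<forall>y\<in>T. f y \<in> cyc g y"
  shows "cyc f x \<subseteq> cyc g x"
proof -
  have "\<forall>n. (f ^^ n) x \<in> cyc g x"
  proof
    fix n show "(f ^^ n) x \<in> cyc g x"
    proof (induction n)
      case 0 then show ?case by (simp add: cyc_self)
    next
      case (Suc n)
      have "(f ^^ n) x \<in> T" using funpow_in[of x T f n] assms by blast
      then have "f ((f ^^ n) x) \<in> cyc g ((f ^^ n) x)" using assms(3) by blast
      then show ?case using cyc_trans[OF Suc] by auto
    qed
  qed
  then show ?thesis unfolding cyc_def by auto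
qed

lemma cyc_inv:
  assumes "finite B" "bij_betw f B B" "x \<in> B"
  shows "cyc (inv_into B f) x = cyc f x"
proof -
  let ?g = "inv_into B f"
  have bg: "bij_betw ?g B B" using assms(2) by (simp add: bij_betw_inv_into)
  have fB: "f ` B \<subseteq> B" "?g ` B \<subseteq> B" using bij_betw_imp_surj_on[OF assms(2)] bij_betw_imp_surj_on[OF bg] by auto
  have inj: "inj_on f B" using bij_betw_imp_surj_on[OF assms(2)] bij_betw_imp_inj_on[OF assms(2)] by auto
  have "\<forall>y\<in>B. ?g y \<in> cyc f y"
  proof
    fix y assume y: "y \<in> B"
    then have "f (?g y) = y" using assms(2) by (simp add: bij_betw_def f_inv_into_f)
    then have "y \<in> cyc f (?g y)" using cyc_step cyc_self by metis
    then show "?g y \<in> cyc f y" using cyc_sym[OF assms(1,2)] fB(2) y by blast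
  qed
  moreover have "\<forall>y\<in>B. f y \<in> cyc ?g y"
  proof
    fix y assume y: "y \<in> B"
    then have "?g (f y) = y" using inj by simp
    then have "y \<in> cyc ?g (f y)" using cyc_step cyc_self by metis
    then show "f y \<in> cyc ?g y" using cyc_sym[OF assms(1) bg] fB(1) y by blast
  qed
  ultimately show ?thesis using cyc_sub_gen[OF assms(3)] fB by (meson subset_antisym)
qed

lemma cyc_key:
  assumes "x \<in> B" "f ` B \<subseteq> B" "\<forall>y\<in>B. k (f y) = k y" "z \<in> cyc f x"
  shows "k z = k x"
proof -
  obtain n where "z = (f ^^ n) x" using assms(4) unfolding cyc_def by auto
  moreover have "k ((f ^^ n) x) = k x \<and> (f ^^ n) x \<in> B"
    using assms(1-3) by (induction n) auto
  ultimately show ?thesis by simp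
qed

lemma count2:
  assumes "finite B" "bij_betw f B B" "\<forall>y\<in>B. k (f y) = k y"
    "\<forall>x\<in>B. card (cyc f ` {y\<in>B. k y = k x}) = 2" "K \<subseteq> k ` B"
  shows "card (cyc f ` {y\<in>B. k y \<in> K}) = 2 * card K"
proof -
  have fB: "f ` B \<subseteq> B" using bij_betw_imp_surj_on[OF assms(2)] bij_betw_imp_inj_on[OF assms(2)] by auto
  have fK: "finite K" using assms(1,5) finite_surj by blast
  have eq: "cyc f ` {y\<in>B. k y \<in> K} = (\<Union>c\<in>K. cyc f ` {y\<in>B. k y = c})" by auto
  have "card (\<Union>c\<in>K. cyc f ` {y\<in>B. k y = c}) = (\<Sum>c\<in>K. card (cyc f ` {y\<in>B. k y = c}))"
  proof (rule card_UN_disjoint[OF fK])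
    show "\<forall>i\<in>K. finite (cyc f ` {y \<in> B. k y = i})" using assms(1) by auto
    show "\<forall>i\<in>K. \<forall>j\<in>K. i \<noteq> j \<longrightarrow> cyc f ` {y \<in> B. k y = i} \<inter> cyc f ` {y \<in> B. k y = j} = {}"
    proof (intro ballI impI)
      fix i j assume "i \<in> K" "j \<in> K" "i \<noteq> j"
      show "cyc f ` {y \<in> B. k y = i} \<inter> cyc f ` {y \<in> B. k y = j} = {}"
      proof (rule ccontr)
        assume "\<not> ?thesis"
        then obtain y1 y2 where y: "y1 \<in> B" "y2 \<in> B" "k y1 = i" "k y2 = j" "cyc f y1 = cyc f y2"
          by auto
        then have "y2 \<in> cyc f y1" using cyc_self by metis
        then have "k y2 = k y1" using cyc_key[OF y(1) fB assms(3)] by blast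
        then show False using y \<open>i \<noteq> j\<close> by simp
      qed
    qed
  qed
  also have "\<dots> = (\<Sum>c\<in>K. 2)"
  proof (rule sum.cong[OF refl])
    fix c assume "c \<in> K"
    then obtain x where "x \<in> B" "c = k x" using assms(5) by blast
    then show "card (cyc f ` {y \<in> B. k y = c}) = 2" using assms(4) by blast
  qed
  finally show ?thesis using eq by simp
qed


lemma main_L:
  assumes fin: "finite B" and bt: "bij_betw tau B B" and SB: "S \<subseteq> B"
    and pS: "psi ` S \<subseteq> S" and ip: "inj_on psi S"
  shows "card (cyc (restr S psi \<circ> tau) ` B)
         = card (cyc (psi \<circ> induced S tau) ` S) + card {C \<in> cyc tau ` B. C \<inter> S = {}}"
proof -
  define g where "g = restr S psi \<circ> tau"
  define h where "h = psi \<circ> induced S tau"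
  have tB: "tau ` B \<subseteq> B" and ti: "inj_on tau B"
    using bij_betw_imp_surj_on[OF bt] bij_betw_imp_inj_on[OF bt] by auto
  have rB: "restr S psi ` B \<subseteq> B" using pS SB unfolding restr_def by auto
  have ri: "inj_on (restr S psi) B"
  proof (rule inj_onI)
    fix x y assume "x \<in> B" "y \<in> B" "restr S psi x = restr S psi y"
    then show "x = y"
    proof (cases "x \<in> S"; cases "y \<in> S")
      assume "x \<in> S" "y \<in> S" "restr S psi x = restr S psi y"
      then show "x = y" using ip unfolding restr_def inj_on_def by simp
    next
      assume "x \<in> S" "y \<notin> S" "restr S psi x = restr S psi y"
      then show "x = y" using pS unfolding restr_def by auto
    next
      assume "x \<notin> S" "y \<in> S" "restr S psi x = restr S psi y"
      then show "x = y" using pS unfolding restr_def by auto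
    next
      assume "x \<notin> S" "y \<notin> S" "restr S psi x = restr S psi y"
      then show "x = y" unfolding restr_def by simp
    qed
  qed
  have gB: "g ` B \<subseteq> B" using tB rB unfolding g_def by auto
  have gi: "inj_on g B" unfolding g_def by (rule comp_inj_on[OF ti inj_on_subset[OF ri tB]])
  have bg: "bij_betw g B B" using endo_inj_surj[OF fin gB gi] gi unfolding bij_betw_def by simp
  define N where "N y = (LEAST n. 0 < n \<and> (tau ^^ n) y \<in> S)" for y
  have Nex: "\<exists>n. 0 < n \<and> (tau ^^ n) y \<in> S" if "y \<in> S" for y
  proof -
    have "y \<in> B" using that SB by auto
    from period[OF fin bt this] obtain p where "p > 0" "(tau ^^ p) y = y" by blast
    then show ?thesis using that by auto
  qed
  have N1: "0 < N y" "(tau ^^ N y) y \<in> S" if "y \<in> S" for y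
    using LeastI_ex[OF Nex[OF that]] unfolding N_def by auto
  have N2: "(tau ^^ k) y \<notin> S" if "y \<in> S" "0 < k" "k < N y" for y k
    using not_less_Least[of k "\<lambda>n. 0 < n \<and> (tau ^^ n) y \<in> S"] that unfolding N_def by auto
  have gt: "(g ^^ k) y = (tau ^^ k) y" if "y \<in> S" "k < N y" for y k
    using that(2)
  proof (induction k)
    case 0 then show ?case by simp
  next
    case (Suc k)
    then have "(tau ^^ Suc k) y \<notin> S" using N2[OF that(1), of "Suc k"] Suc.prems by simp
    then show ?case using Suc unfolding g_def restr_def by simp
  qed
  have gN: "(g ^^ N y) y = h y" if yS: "y \<in> S" for y
  proof -
    obtain k where k: "N y = Suc k" using N1(1)[OF yS] gr0_implies_Suc by blast
    have "(g ^^ N y) y = g ((tau ^^ k) y)" using gt[OF yS, of k] k by simp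
    also have "\<dots> = psi ((tau ^^ N y) y)" using N1(2)[OF yS] k unfolding g_def restr_def by simp
    also have "\<dots> = h y" using yS unfolding h_def induced_def N_def by simp
    finally show ?thesis .
  qed
  have gS: "(g ^^ k) y \<notin> S" if "y \<in> S" "0 < k" "k < N y" for y k
    using gt[OF that(1,3)] N2[OF that] by simp
  have hS: "h ` S \<subseteq> S" using N1(2) pS gN unfolding h_def induced_def N_def by auto
  have hsub: "cyc h x \<subseteq> cyc g x" if "x \<in> S" for x
    using cyc_sub_gen[OF that hS] gN cyc_funpow by metis
  have hsub2: "(g ^^ m) y \<in> cyc h y" if "y \<in> S" "(g ^^ m) y \<in> S" for m y
    using that
  proof (induction m arbitrary: y rule: less_induct)
    case (less m)
    show ?case
    proof (cases "m = 0")
      case True then show ?thesis by (simp add: cyc_self)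
    next
      case False
      have "\<not> m < N y" using gS[OF less.prems(1)] False less.prems(2) by auto
      then have "(g ^^ m) y = (g ^^ (m - N y)) ((g ^^ N y) y)"
        by (metis comp_apply funpow_add le_add_diff_inverse2 not_less)
      also have "\<dots> = (g ^^ (m - N y)) (h y)" using gN[OF less.prems(1)] by simp
      finally have eq: "(g ^^ m) y = (g ^^ (m - N y)) (h y)" .
      have hy: "h y \<in> S" using hS less.prems(1) by auto
      have "m - N y < m" using N1(1)[OF less.prems(1)] False by simp
      then have "(g ^^ (m - N y)) (h y) \<in> cyc h (h y)"
        using less.IH[OF _ hy] less.prems(2) eq by simp
      moreover have "cyc h (h y) \<subseteq> cyc h y" using cyc_trans cyc_step cyc_self by metis
      ultimately show ?thesis using eq by auto
    qed
  qed
  have hcyc: "cyc h x = cyc g x \<inter> S" if "x \<in> S" for x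
  proof
    show "cyc h x \<subseteq> cyc g x \<inter> S" using hsub[OF that] cyc_subset[OF that hS] by auto
    show "cyc g x \<inter> S \<subseteq> cyc h x"
    proof
      fix z assume "z \<in> cyc g x \<inter> S"
      then obtain m where "z = (g ^^ m) x" "z \<in> S" unfolding cyc_def by auto
      then show "z \<in> cyc h x" using hsub2[OF that] by simp
    qed
  qed
  have a: "card (cyc g ` S) = card (cyc h ` S)"
  proof -
    have "(\<lambda>C. C \<inter> S) ` (cyc g ` S) = cyc h ` S" using hcyc by (auto simp: image_image)
    moreover have "inj_on (\<lambda>C. C \<inter> S) (cyc g ` S)"
    proof (rule inj_onI)
      fix C1 C2 assume "C1 \<in> cyc g ` S" "C2 \<in> cyc g ` S" "C1 \<inter> S = C2 \<inter> S"
      then obtain x y where xy: "x \<in> S" "y \<in> S" "C1 = cyc g x" "C2 = cyc g y" by blast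
      have "x \<in> C1 \<inter> S" using xy cyc_self[of x g] by simp
      then have "x \<in> cyc g y" using \<open>C1 \<inter> S = C2 \<inter> S\<close> xy(4) by simp
      then show "C1 = C2" using cyc_eq[OF fin bg _ \<open>x \<in> cyc g y\<close>] xy SB by auto
    qed
    ultimately show ?thesis using card_image by metis
  qed
  define D where "D = {C \<in> cyc tau ` B. C \<inter> S = {}}"
  have disj: "cyc g ` S \<inter> D = {}"
  proof (rule ccontr)
    assume "cyc g ` S \<inter> D \<noteq> {}"
    then obtain s where s: "s \<in> S" "cyc g s \<in> D" by blast
    have "s \<in> cyc g s \<inter> S" using s(1) cyc_self[of s g] by simp
    moreover have "cyc g s \<inter> S = {}" using s(2) unfolding D_def by simp
    ultimately show False by (simp only: empty_iff)
  qed
  have sub1: "cyc g ` B \<subseteq> cyc g ` S \<union> D"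
  proof
    fix C assume "C \<in> cyc g ` B"
    then obtain y where y: "y \<in> B" "C = cyc g y" by auto
    show "C \<in> cyc g ` S \<union> D"
    proof (cases "C \<inter> S = {}")
      case False
      then obtain z where "z \<in> C" "z \<in> S" by auto
      then have "cyc g z = C" using cyc_eq[OF fin bg y(1)] y by auto
      then show ?thesis using \<open>z \<in> S\<close> by auto
    next
      case True
      have "\<forall>n. (g ^^ n) y = (tau ^^ n) y"
      proof
        fix n show "(g ^^ n) y = (tau ^^ n) y"
        proof (induction n)
          case 0 then show ?case by simp
        next
          case (Suc n)
          have "(g ^^ Suc n) y \<in> C" using y(2) cyc_funpow[of "Suc n" g y] by simp
          then have "(g ^^ Suc n) y \<notin> S" using True by (simp only: disjoint_iff) blast
          then have "g ((tau ^^ n) y) \<notin> S" using Suc by simp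
          then have "tau ((tau ^^ n) y) \<notin> S" using pS unfolding g_def restr_def
            by (auto split: if_splits)
          then show ?case using Suc unfolding g_def restr_def by simp
        qed
      qed
      then have "C = cyc tau y" using y unfolding cyc_def by auto
      then show ?thesis using True y unfolding D_def by auto
    qed
  qed
  have sub2: "cyc g ` S \<union> D \<subseteq> cyc g ` B"
  proof -
    have "D \<subseteq> cyc g ` B"
    proof
      fix C assume "C \<in> D"
      then obtain y where y: "y \<in> B" "C = cyc tau y" "C \<inter> S = {}" unfolding D_def by auto
      have "\<forall>n. (g ^^ n) y = (tau ^^ n) y"
      proof
        fix n show "(g ^^ n) y = (tau ^^ n) y"
        proof (induction n)
          case 0 then show ?case by simp
        next
          case (Suc n)
          have "(tau ^^ Suc n) y \<in> C" using y(2) cyc_funpow[of "Suc n" tau y] by simp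
          then have "(tau ^^ Suc n) y \<notin> S" using y(3) by (simp only: disjoint_iff) blast
          then show ?case using Suc unfolding g_def restr_def by simp
        qed
      qed
      then have "C = cyc g y" using y unfolding cyc_def by auto
      then show "C \<in> cyc g ` B" using y by auto
    qed
    then show ?thesis using SB by auto
  qed
  have "cyc g ` B = cyc g ` S \<union> D" using sub1 sub2 by blast
  moreover have "finite (cyc g ` S)" "finite D" using fin SB finite_subset unfolding D_def by auto
  ultimately have "card (cyc g ` B) = card (cyc g ` S) + card D"
    using disj card_Un_disjoint by metis
  then show ?thesis using a unfolding g_def h_def D_def by simp
qed


lemma hm_facts:
  assumes "hypermap B tau psi vx he"
  shows "finite B" "bij_betw tau B B" "bij_betw psi B B"
    "\<forall>x\<in>B. vx (tau x) = vx x" "\<forall>x\<in>B. he (psi x) = he x"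
    "\<forall>x\<in>B. card {y\<in>B. vx y = vx x \<and> he y = he x} = 2"
    "\<forall>x\<in>B. \<forall>y\<in>B. vx y = vx x \<and> he y = he x \<and> y \<noteq> x \<longrightarrow> cyc tau y \<noteq> cyc tau x"
    "\<forall>x\<in>B. card (cyc tau ` {y\<in>B. vx y = vx x}) = 2"
    "\<forall>x\<in>B. card (cyc psi ` {y\<in>B. he y = he x}) = 2"
  using assms unfolding hypermap_def by auto

lemma iso_eq:
  assumes H: "hypermap B tau psi vx he" and S: "S = labs B he K"
  shows "{C \<in> cyc tau ` B. C \<inter> S = {}} = cyc tau ` {y\<in>B. vx y \<in> vx ` B - vx ` S}"
proof -
  note F = hm_facts[OF H]
  have tB: "tau ` B \<subseteq> B" using bij_betw_imp_surj_on[OF F(2)] by auto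
  have SB: "S \<subseteq> B" using S unfolding labs_def by auto
  show ?thesis
  proof
    show "cyc tau ` {y\<in>B. vx y \<in> vx ` B - vx ` S} \<subseteq> {C \<in> cyc tau ` B. C \<inter> S = {}}"
    proof
      fix C assume "C \<in> cyc tau ` {y\<in>B. vx y \<in> vx ` B - vx ` S}"
      then obtain y where y: "y \<in> B" "vx y \<notin> vx ` S" "C = cyc tau y" by blast
      have "C \<inter> S = {}"
      proof (rule ccontr)
        assume "C \<inter> S \<noteq> {}"
        then obtain z where z: "z \<in> C" "z \<in> S" by blast
        have "vx z = vx y" using cyc_key[OF y(1) tB F(4)] z(1) y(3) by simp
        then show False using z(2) y(2) by (metis image_eqI)
      qed
      then show "C \<in> {C \<in> cyc tau ` B. C \<inter> S = {}}" using y by simp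
    qed
    show "{C \<in> cyc tau ` B. C \<inter> S = {}} \<subseteq> cyc tau ` {y\<in>B. vx y \<in> vx ` B - vx ` S}"
    proof
      fix C assume "C \<in> {C \<in> cyc tau ` B. C \<inter> S = {}}"
      then obtain y where y: "y \<in> B" "C = cyc tau y" "C \<inter> S = {}" by blast
      have "vx y \<notin> vx ` S"
      proof
        assume "vx y \<in> vx ` S"
        then obtain s where s: "s \<in> S" "vx y = vx s" by blast
        have sB: "s \<in> B" using s(1) SB by auto
        let ?P = "{z\<in>B. vx z = vx s \<and> he z = he s}"
        have "card ?P = 2" using F(6) sB by blast
        moreover have "s \<in> ?P" using sB by simp
        ultimately obtain s' where s': "s' \<in> ?P" "s' \<noteq> s"
          by (metis (no_types, lifting) card_2_iff insert_iff)
        have s'B: "s' \<in> B" and s'v: "vx s' = vx s" and s'e: "he s' = he s" using s'(1) by auto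
        have s'S: "s' \<in> S" using s'B s'e s(1) S unfolding labs_def by simp
        have d1: "cyc tau s' \<noteq> cyc tau s" using F(7) sB s'B s'v s'e s'(2) by blast
        have d2: "cyc tau y \<noteq> cyc tau s"
        proof
          assume "cyc tau y = cyc tau s"
          then have "s \<in> C" using y(2) cyc_self[of s tau] by simp
          then show False using y(3) s(1) by (meson disjoint_iff)
        qed
        have d3: "cyc tau y \<noteq> cyc tau s'"
        proof
          assume "cyc tau y = cyc tau s'"
          then have "s' \<in> C" using y(2) cyc_self[of s' tau] by simp
          then show False using y(3) s'S by (meson disjoint_iff)
        qed
        let ?V = "cyc tau ` {z\<in>B. vx z = vx s}"
        have "card ?V = 2" using F(8) sB by blast
        moreover have "{cyc tau s, cyc tau s', cyc tau y} \<subseteq> ?V"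
          using sB s'B s'v y(1) s(2) by auto
        moreover have "card {cyc tau s, cyc tau s', cyc tau y} = 3"
          using d1 d2 d3 by auto
        moreover have "finite ?V" using F(1) by simp
        ultimately show False using card_mono by (metis numeral_le_iff semiring_norm(69) semiring_norm(72) le_numeral_extra(4) Suc_n_not_le_n numeral_2_eq_2 numeral_3_eq_3)
      qed
      then show "C \<in> cyc tau ` {y\<in>B. vx y \<in> vx ` B - vx ` S}" using y by blast
    qed
  qed
qed

lemma F4:
  assumes H: "hypermap B tau psi vx he" and S: "S = labs B he K"
  shows "ncyc B (restr S psi \<circ> tau) = ncyc S (psi \<circ> induced S tau) + 2 * card (vx ` B - vx ` S)"
proof -
  note F = hm_facts[OF H]
  have SB: "S \<subseteq> B" using S unfolding labs_def by auto
  have pB: "psi ` B \<subseteq> B" using bij_betw_imp_surj_on[OF F(3)] by auto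
  have pS: "psi ` S \<subseteq> S" using S pB F(5) unfolding labs_def by auto
  have ip: "inj_on psi S" using bij_betw_imp_inj_on[OF F(3)] SB inj_on_subset by blast
  have "card {C \<in> cyc tau ` B. C \<inter> S = {}} = 2 * card (vx ` B - vx ` S)"
    unfolding iso_eq[OF H S] by (rule count2[OF F(1) F(2) F(4) F(8)]) auto
  then show ?thesis using main_L[OF F(1) F(2) SB pS ip] unfolding ncyc_def by simp
qed

lemma card_fibres:
  assumes "finite X"
  shows "card X = (\<Sum>c\<in>k ` X. card {x\<in>X. k x = c})"
proof -
  have "X = (\<Union>c\<in>k ` X. {x\<in>X. k x = c})" by auto
  then have "card X = card (\<Union>c\<in>k ` X. {x\<in>X. k x = c})" by simp
  also have "\<dots> = (\<Sum>c\<in>k ` X. card {x\<in>X. k x = c})"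
    by (rule card_UN_disjoint) (use assms in auto)
  finally show ?thesis .
qed

lemma deg:
  assumes H: "hypermap B tau psi vx he"
  shows "card B = 2 * (\<Sum>e\<in>he ` B. hdeg B vx he e)"
proof -
  note F = hm_facts[OF H]
  have "card B = (\<Sum>e\<in>he ` B. card {x\<in>B. he x = e})" by (rule card_fibres[OF F(1)])
  also have "\<dots> = (\<Sum>e\<in>he ` B. 2 * hdeg B vx he e)"
  proof (rule sum.cong[OF refl])
    fix e assume "e \<in> he ` B"
    let ?L = "{x\<in>B. he x = e}"
    have fL: "finite ?L" using F(1) by simp
    have "card ?L = (\<Sum>v\<in>vx ` ?L. card {x\<in>?L. vx x = v})" by (rule card_fibres[OF fL])
    also have "\<dots> = (\<Sum>v\<in>vx ` ?L. 2)"
    proof (rule sum.cong[OF refl])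
      fix v assume "v \<in> vx ` ?L"
      then obtain x where x: "x \<in> B" "he x = e" "vx x = v" by blast
      have "{x\<in>?L. vx x = v} = {y\<in>B. vx y = vx x \<and> he y = he x}" using x by auto
      then show "card {x\<in>?L. vx x = v} = 2" using F(6) x(1) by simp
    qed
    also have "\<dots> = 2 * card (vx ` ?L)" by simp
    also have "vx ` ?L = {vx x | x. x \<in> B \<and> he x = e}" by blast
    finally show "card ?L = 2 * hdeg B vx he e" unfolding hdeg_def by simp
  qed
  also have "\<dots> = 2 * (\<Sum>e\<in>he ` B. hdeg B vx he e)" by (simp add: sum_distrib_left)
  finally show ?thesis .
qed


theorem mainTheorem1:
  fixes B :: "'b set" and tau psi :: "'b \<Rightarrow> 'b"
    and vx :: "'b \<Rightarrow> 'v" and he :: "'b \<Rightarrow> 'e" and A :: "'e set"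
  assumes "hypermap B tau psi vx he"
    and "hm_connected B vx he"
    and "A \<subseteq> he ` B"
  shows "hm_chi (pdual B tau psi he A)
           = sub_chi B tau psi vx he A + sub_chi B tau psi vx he (he ` B - A)
             - 2 * real (card (vx ` B))"
proof -
  note H = assms(1)
  note F = hm_facts[OF H]
  define BA where "BA = labs B he A"
  define BC where "BC = labs B he (he ` B - A)"
  define psi' where "psi' = (\<lambda>x. if x \<in> BA then inv_into B psi x else psi x)"
  define g1 where "g1 = restr BA psi \<circ> tau"
  define g2 where "g2 = restr BC psi \<circ> tau"
  have pd: "pdual B tau psi he A = (B, g1, psi')"
    unfolding pdual_def g1_def psi'_def BA_def by simp
  have tB: "tau ` B \<subseteq> B" using bij_betw_imp_surj_on[OF F(2)] by auto
  have pB: "psi ` B \<subseteq> B" using bij_betw_imp_surj_on[OF F(3)] by auto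
  have pi: "inj_on psi B" using bij_betw_imp_inj_on[OF F(3)] by auto
  have BAin: "x \<in> BA \<longleftrightarrow> he x \<in> A" if "x \<in> B" for x using that unfolding BA_def labs_def by auto
  have BCin: "x \<in> BC \<longleftrightarrow> he x \<notin> A" if "x \<in> B" for x using that unfolding BC_def labs_def by auto
  have BAB: "BA \<subseteq> B" unfolding BA_def labs_def by auto
  have BCB: "BC \<subseteq> B" unfolding BC_def labs_def by auto
  have invB: "inv_into B psi z \<in> B" "psi (inv_into B psi z) = z" if "z \<in> B" for z
    using that bij_betw_imp_surj_on[OF F(3)] by (auto intro: inv_into_into f_inv_into_f)
  have cp: "cyc psi' x = cyc psi x" if x: "x \<in> B" for x
  proof (cases "x \<in> BA")
    case True
    have cl: "psi' ` BA \<subseteq> BA"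
    proof
      fix w assume "w \<in> psi' ` BA"
      then obtain z where z: "z \<in> BA" "w = psi' z" by blast
      have zB: "z \<in> B" using z(1) BAB by auto
      have "he (inv_into B psi z) = he z" using invB[OF zB] F(5) by metis
      then show "w \<in> BA" using z zB invB[OF zB] BAin unfolding psi'_def by simp
    qed
    have "cyc psi' x = cyc (inv_into B psi) x"
      by (rule cyc_cong[OF cl _ True]) (simp add: psi'_def)
    also have "\<dots> = cyc psi x" by (rule cyc_inv[OF F(1) F(3) x])
    finally show ?thesis .
  next
    case False
    have cl: "psi ` (B - BA) \<subseteq> B - BA" using pB F(5) BAin by auto
    have "cyc psi x = cyc psi' x"
      by (rule cyc_cong[OF cl _]) (use False x in \<open>auto simp: psi'_def\<close>)
    then show ?thesis by simp
  qed
  have n2: "ncyc B psi' = 2 * card (he ` B)"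
  proof -
    have "cyc psi' ` B = cyc psi ` B" using cp by auto
    moreover have "card (cyc psi ` {y\<in>B. he y \<in> he ` B}) = 2 * card (he ` B)"
      by (rule count2[OF F(1) F(3) F(5) F(9)]) simp
    moreover have "{y\<in>B. he y \<in> he ` B} = B" by auto
    ultimately show ?thesis unfolding ncyc_def by simp
  qed
  have g2B: "g2 ` B \<subseteq> B" unfolding g2_def restr_def using tB pB by auto
  have agree: "g2 z = (psi' \<circ> g1) z" if z: "z \<in> B" for z
  proof -
    have tz: "tau z \<in> B" using tB z by auto
    show ?thesis
    proof (cases "tau z \<in> BA")
      case True
      have "psi (tau z) \<in> BA" using True tz pB F(5) BAin by auto
      moreover have "inv_into B psi (psi (tau z)) = tau z" using pi tz by simp
      moreover have "tau z \<notin> BC" using True tz BAin BCin by auto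
      ultimately show ?thesis using True unfolding g1_def g2_def psi'_def restr_def by simp
    next
      case False
      have "tau z \<in> BC" using False tz BAin BCin by auto
      then show ?thesis using False unfolding g1_def g2_def psi'_def restr_def by simp
    qed
  qed
  have n3: "ncyc B (psi' \<circ> g1) = ncyc B g2"
  proof -
    have "cyc g2 x = cyc (psi' \<circ> g1) x" if "x \<in> B" for x
      by (rule cyc_cong[OF g2B _ that]) (use agree in blast)
    then have "cyc (psi' \<circ> g1) ` B = cyc g2 ` B" by auto
    then show ?thesis unfolding ncyc_def by simp
  qed
  have n1: "ncyc B g1 = ncyc BA (psi \<circ> induced BA tau) + 2 * card (vx ` B - vx ` BA)"
    unfolding g1_def by (rule F4[OF H BA_def])
  have n3': "ncyc B g2 = ncyc BC (psi \<circ> induced BC tau) + 2 * card (vx ` B - vx ` BC)"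
    unfolding g2_def by (rule F4[OF H BC_def])
  have fE: "finite (he ` B)" using F(1) by simp
  have dg: "card B = 2 * ((\<Sum>e\<in>A. hdeg B vx he e) + (\<Sum>e\<in>he ` B - A. hdeg B vx he e))"
    using deg[OF H] sum.subset_diff[OF assms(3) fE, of "hdeg B vx he"] by simp
  have cE: "card (he ` B) = card A + card (he ` B - A)"
    using card_Diff_subset[OF finite_subset[OF assms(3) fE] assms(3)] card_mono[OF fE assms(3)] by simp
  show ?thesis
    unfolding pd hm_chi_def sub_chi_def Let_def BA_def[symmetric] BC_def[symmetric]
    using n1 n2 n3 n3' dg cE by (simp add: field_simps)
qed

end
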